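(* Suppose $\mathcal{U}$ is a compatible uniformity for a space $X$ and $\kappa$ is a cardinal. If $A\subseteq X$ is totally bounded and $\mathcal{U}$ (ordered by reverse inclusion) has calibre $(\kappa^+,\omega)$, then $w(A)\le\kappa$.
   Context: All spaces are Tychonoff. A subset $A$ is totally bounded if for every $U\in\mathcal{U}$ there is finite $F\subseteq A$ with $A\subseteq\bigcup_{x\in F}U[x]$, where $U[x]=\{y:(x,y)\in U\}$. A directed set $P$ has calibre $(\mu,\lambda)$ if every subset of $P$ of size $\mu$ contains a subset of size $\lambda$ with an upper bound in $P$. $w(A)$ is the weight (least size of a base) of $A$ as a subspace. *)

theory Defs
  imports "HOL-Analysis.Analysis"
begin

definition Tychonoff_space :: "'a topology \<Rightarrow> bool" where
  "Tychonoff_space X \<longleftrightarrow> completely_regular_space X \<and> t1_space X"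

definition uniformity_on :: "'a set \<Rightarrow> ('a \<times> 'a) set set \<Rightarrow> bool" where
  "uniformity_on S \<U> \<longleftrightarrow>
     \<U> \<noteq> {} \<and>
     (\<forall>V\<in>\<U>. Id_on S \<subseteq> V \<and> V \<subseteq> S \<times> S) \<and>
     (\<forall>V\<in>\<U>. \<forall>W. V \<subseteq> W \<and> W \<subseteq> S \<times> S \<longrightarrow> W \<in> \<U>) \<and>
     (\<forall>V\<in>\<U>. \<forall>W\<in>\<U>. V \<inter> W \<in> \<U>) \<and>
     (\<forall>V\<in>\<U>. V\<inverse> \<in> \<U>) \<and>
     (\<forall>V\<in>\<U>. \<exists>W\<in>\<U>. W O W \<subseteq> V)"

text \<open>A uniformity compatible with the topology of X: it induces exactly the open sets of X.
  Here \<open>V `` {x}\<close> is U[x].\<close>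
definition compatible_uniformity :: "'a topology \<Rightarrow> ('a \<times> 'a) set set \<Rightarrow> bool" where
  "compatible_uniformity X \<U> \<longleftrightarrow>
     uniformity_on (topspace X) \<U> \<and>
     (\<forall>G. openin X G \<longleftrightarrow> G \<subseteq> topspace X \<and> (\<forall>x\<in>G. \<exists>V\<in>\<U>. V `` {x} \<subseteq> G))"

definition totally_bounded_in :: "('a \<times> 'a) set set \<Rightarrow> 'a set \<Rightarrow> bool" where
  "totally_bounded_in \<U> A \<longleftrightarrow>
     (\<forall>V\<in>\<U>. \<exists>F. finite F \<and> F \<subseteq> A \<and> A \<subseteq> (\<Union>x\<in>F. V `` {x}))"

text \<open>Calibre (kappa^+, omega) of U ordered by reverse inclusion (kappa = |K|):
  every subfamily of size kappa^+ contains a countably infinite subfamily with an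
  upper bound, i.e. some V in U contained in all its members.\<close>
definition calibre_succ_omega :: "('a \<times> 'a) set set \<Rightarrow> 'k set \<Rightarrow> bool" where
  "calibre_succ_omega \<U> K \<longleftrightarrow>
     (\<forall>S \<subseteq> \<U>. ordIso2 (card_of S) (cardSuc (card_of K)) \<longrightarrow>
        (\<exists>T \<subseteq> S. infinite T \<and> countable T \<and> (\<exists>V\<in>\<U>. \<forall>W\<in>T. V \<subseteq> W)))"

definition base_of_top :: "'a topology \<Rightarrow> 'a set set \<Rightarrow> bool" where
  "base_of_top X \<B> \<longleftrightarrow> (\<forall>B\<in>\<B>. openin X B) \<and>
     (\<forall>G x. openin X G \<and> x \<in> G \<longrightarrow> (\<exists>B\<in>\<B>. x \<in> B \<and> B \<subseteq> G))"

definition weight_le :: "'a topology \<Rightarrow> 'k set \<Rightarrow> bool" where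
  "weight_le X K \<longleftrightarrow> (\<exists>\<B>. base_of_top X \<B> \<and> ordLeq2 (card_of \<B>) (card_of K))"

end

theory Submission
  imports Defs
begin

unbundle cardinal_syntax

lemma u_p1: "uniformity_on S U \<Longrightarrow> U \<noteq> {}"
  unfolding uniformity_on_def by (elim conjE) assumption
lemma u_p2: "uniformity_on S U \<Longrightarrow> \<forall>V\<in>U. Id_on S \<subseteq> V \<and> V \<subseteq> S \<times> S"
  unfolding uniformity_on_def by (elim conjE) assumption
lemma u_p3: "uniformity_on S U \<Longrightarrow> \<forall>V\<in>U. \<forall>W. V \<subseteq> W \<and> W \<subseteq> S \<times> S \<longrightarrow> W \<in> U"
  unfolding uniformity_on_def by (elim conjE) assumption
lemma u_p4: "uniformity_on S U \<Longrightarrow> \<forall>V\<in>U. \<forall>W\<in>U. V \<inter> W \<in> U"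
  unfolding uniformity_on_def by (elim conjE) assumption
lemma u_p5: "uniformity_on S U \<Longrightarrow> \<forall>V\<in>U. V\<inverse> \<in> U"
  unfolding uniformity_on_def by (elim conjE) assumption
lemma u_p6: "uniformity_on S U \<Longrightarrow> \<forall>V\<in>U. \<exists>W\<in>U. W O W \<subseteq> V"
  unfolding uniformity_on_def by (elim conjE) assumption

lemma u_sub: "uniformity_on S U \<Longrightarrow> V \<in> U \<Longrightarrow> V \<subseteq> S \<times> S"
  using u_p2 by blast
lemma u_idon: "uniformity_on S U \<Longrightarrow> V \<in> U \<Longrightarrow> Id_on S \<subseteq> V"
  using u_p2 by blast
lemma u_refl: "uniformity_on S U \<Longrightarrow> V \<in> U \<Longrightarrow> x \<in> S \<Longrightarrow> (x,x) \<in> V"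
  using u_idon[of S U V] Id_onI[of x S] by (rule subsetD)
lemma u_up: "uniformity_on S U \<Longrightarrow> V \<in> U \<Longrightarrow> V \<subseteq> W \<Longrightarrow> W \<subseteq> S \<times> S \<Longrightarrow> W \<in> U"
  using u_p3 by blast
lemma u_int: "uniformity_on S U \<Longrightarrow> V \<in> U \<Longrightarrow> W \<in> U \<Longrightarrow> V \<inter> W \<in> U"
  using u_p4 by blast
lemma u_conv: "uniformity_on S U \<Longrightarrow> V \<in> U \<Longrightarrow> V\<inverse> \<in> U"
  using u_p5 by blast
lemma u_half: "uniformity_on S U \<Longrightarrow> V \<in> U \<Longrightarrow> \<exists>W\<in>U. W O W \<subseteq> V"
  using u_p6 by blast
lemma u_ne: "uniformity_on S U \<Longrightarrow> U \<noteq> {}"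
  by (rule u_p1)

lemma u_symhalf:
  assumes "uniformity_on S U" "V \<in> U"
  shows "\<exists>W\<in>U. W O W \<subseteq> V \<and> W\<inverse> = W"
proof -
  obtain W1 where W1: "W1 \<in> U" "W1 O W1 \<subseteq> V" using u_half[OF assms] by blast
  have "W1 \<inter> W1\<inverse> \<in> U" using u_int[OF assms(1) W1(1) u_conv[OF assms(1) W1(1)]] .
  moreover have "(W1 \<inter> W1\<inverse>) O (W1 \<inter> W1\<inverse>) \<subseteq> W1 O W1" by (intro relcomp_mono) auto
  then have "(W1 \<inter> W1\<inverse>) O (W1 \<inter> W1\<inverse>) \<subseteq> V" using W1(2) by (rule subset_trans)
  moreover have "(W1 \<inter> W1\<inverse>)\<inverse> = W1 \<inter> W1\<inverse>" by auto
  ultimately show ?thesis by (intro bexI[of _ "W1 \<inter> W1\<inverse>"]) auto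
qed

lemma u_third:
  assumes "uniformity_on S U" "V \<in> U"
  shows "\<exists>W\<in>U. W O W O W \<subseteq> V"
proof -
  obtain W2 where W2: "W2 \<in> U" "W2 O W2 \<subseteq> V" using u_half[OF assms] by blast
  obtain W1 where W1: "W1 \<in> U" "W1 O W1 \<subseteq> W2" using u_half[OF assms(1) W2(1)] by blast
  have "W1 \<subseteq> W1 O W1"
  proof
    fix p assume "p \<in> W1"
    then obtain x y where p: "p = (x,y)" "(x,y) \<in> W1" by (cases p) auto
    then have "y \<in> S" using u_sub[OF assms(1) W1(1)] by blast
    then have "(y,y) \<in> W1" using u_refl[OF assms(1) W1(1)] by blast
    then show "p \<in> W1 O W1" using p by blast
  qed
  then have "W1 O W1 O W1 \<subseteq> W2 O W2" using W1(2) by (intro relcomp_mono) auto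
  then have "W1 O W1 O W1 \<subseteq> V" using W2(2) by (rule subset_trans)
  then show ?thesis using W1(1) by blast
qed

definition H3 :: "('a \<times> 'a) set \<Rightarrow> ('a \<times> 'a) set" where "H3 P = P O P O P"

definition indep :: "'a set \<Rightarrow> ('a \<times> 'a) set \<Rightarrow> ('a \<times> 'a) set \<Rightarrow> bool" where
  "indep A P Q \<longleftrightarrow> \<not> (P \<inter> (A \<times> A) \<subseteq> H3 Q) \<or> \<not> (Q \<inter> (A \<times> A) \<subseteq> H3 P)"

lemma pigeon:
  assumes un: "uniformity_on S U" and tb: "totally_bounded_in U A"
    and V: "V \<in> U" and T: "infinite T" "\<forall>P\<in>T. V \<subseteq> P"
  shows "\<exists>P\<in>T. \<exists>Q\<in>T. P \<noteq> Q \<and> \<not> indep A P Q"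
proof -
  obtain W where W: "W \<in> U" "W O W \<subseteq> V" "W\<inverse> = W" using u_symhalf[OF un V] by blast
  obtain F where F: "finite F" "F \<subseteq> A" "A \<subseteq> (\<Union>x\<in>F. W `` {x})"
    using tb[unfolded totally_bounded_in_def, rule_format, OF W(1)] by blast
  define R where "R P = {(x,y). x \<in> F \<and> y \<in> F \<and> (\<exists>a\<in>A. \<exists>b\<in>A. (x,a) \<in> W \<and> (y,b) \<in> W \<and> (a,b) \<in> P)}" for P
  have "R ` T \<subseteq> Pow (F \<times> F)" unfolding R_def by auto
  moreover have "finite (Pow (F \<times> F))" using F(1) by simp
  ultimately have fin: "finite (R ` T)" by (rule finite_subset)
  have "\<not> inj_on R T"
  proof
    assume "inj_on R T"
    then have "finite T" using finite_imageD[OF fin] by simp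
    then show False using T(1) by simp
  qed
  then obtain P Q where PQ: "P \<in> T" "Q \<in> T" "P \<noteq> Q" "R P = R Q" unfolding inj_on_def by blast
  have key: "P1 \<inter> (A \<times> A) \<subseteq> H3 Q1" if "R P1 = R Q1" "Q1 \<in> T" for P1 Q1
  proof
    fix p assume p: "p \<in> P1 \<inter> (A \<times> A)"
    then obtain a b where ab: "p = (a,b)" "(a,b) \<in> P1" "a \<in> A" "b \<in> A" by auto
    obtain x where x: "x \<in> F" "(x,a) \<in> W" using F(3) ab(3) by blast
    obtain y where y: "y \<in> F" "(y,b) \<in> W" using F(3) ab(4) by blast
    have "(x,y) \<in> R P1" unfolding R_def using x y ab by auto
    then have "(x,y) \<in> R Q1" using that by simp
    then obtain a' b' where a'b': "(x,a') \<in> W" "(y,b') \<in> W" "(a',b') \<in> Q1" unfolding R_def by blast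
    have "(a,x) \<in> W" using x W(3) by blast
    then have "(a,a') \<in> V" using a'b'(1) W(2) by blast
    then have 1: "(a,a') \<in> Q1" using T(2) that(2) by blast
    have "(b',y) \<in> W" using a'b'(2) W(3) by blast
    then have "(b',b) \<in> V" using y(2) W(2) by blast
    then have 2: "(b',b) \<in> Q1" using T(2) that(2) by blast
    show "p \<in> H3 Q1" unfolding H3_def ab(1) by (rule relcompI[OF 1 relcompI[OF a'b'(3) 2]])
  qed
  have k1: "P \<inter> (A \<times> A) \<subseteq> H3 Q" by (rule key[OF PQ(4) PQ(2)])
  have k2: "Q \<inter> (A \<times> A) \<subseteq> H3 P" by (rule key[OF PQ(4)[symmetric] PQ(1)])
  have "\<not> indep A P Q" unfolding indep_def using k1 k2 by simp
  then show ?thesis using PQ by blast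
qed

lemma big_subset:
  assumes "\<not> |M| \<le>o |K|"
  shows "\<exists>S\<subseteq>M. |S| =o cardSuc |K|"
proof -
  have "|K| <o |M|"
    using not_ordLeq_iff_ordLess[OF card_of_Well_order card_of_Well_order, of M K] assms by simp
  then have c: "cardSuc |K| \<le>o |M|"
    using cardSuc_ordLess_ordLeq[OF card_of_Card_order card_of_Card_order, of K M] by simp
  have i: "|Field (cardSuc |K| )| =o cardSuc |K|"
    by (rule card_of_Field_ordIso[OF cardSuc_Card_order[OF card_of_Card_order]])
  have "|Field (cardSuc |K| )| \<le>o |M|" by (rule ordIso_ordLeq_trans[OF i c])
  then have "\<exists>S\<subseteq>M. |Field (cardSuc |K| )| =o |S| \<and> |S| \<le>o |M|"
    by (rule internalize_card_of_ordLeq2[THEN iffD1])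
  then obtain S where S: "S \<subseteq> M" "|Field (cardSuc |K| )| =o |S|"
    by blast
  have "|S| =o cardSuc |K|" by (rule ordIso_transitive[OF ordIso_symmetric[OF S(2)] i])
  then show ?thesis using S(1) by blast
qed

lemma indep_sym: "indep A P Q = indep A Q P"
  unfolding indep_def by (simp add: disj_commute)

lemma zorn_family:
  assumes un: "uniformity_on S U" and tb: "totally_bounded_in U A"
    and cal: "calibre_succ_omega U K"
  shows "\<exists>B\<subseteq>U. |B| \<le>o |K| \<and> (\<forall>V\<in>U. \<exists>P\<in>B. P \<inter> (A \<times> A) \<subseteq> V)"
proof -
  define Fam where "Fam = {B. B \<subseteq> U \<and> (\<forall>P\<in>B. \<forall>Q\<in>B. P \<noteq> Q \<longrightarrow> indep A P Q)}"
  have FamI: "B \<in> Fam" if "B \<subseteq> U" "\<And>P Q. P \<in> B \<Longrightarrow> Q \<in> B \<Longrightarrow> P \<noteq> Q \<Longrightarrow> indep A P Q" for B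
    unfolding Fam_def using that by blast
  have FamD1: "B \<subseteq> U" if "B \<in> Fam" for B using that unfolding Fam_def by blast
  have FamD2: "indep A P Q" if "B \<in> Fam" "P \<in> B" "Q \<in> B" "P \<noteq> Q" for B P Q
    using that unfolding Fam_def by blast
  have "\<forall>C\<in>chains Fam. \<Union>C \<in> Fam"
  proof
    fix C assume C: "C \<in> chains Fam"
    have CF: "C \<subseteq> Fam" using chainsD2[OF C] .
    show "\<Union>C \<in> Fam"
    proof (rule FamI)
      show "\<Union>C \<subseteq> U" using CF FamD1 by blast
    next
      fix P Q assume "P \<in> \<Union>C" "Q \<in> \<Union>C" "P \<noteq> Q"
      then obtain B1 B2 where B: "B1 \<in> C" "B2 \<in> C" "P \<in> B1" "Q \<in> B2" by blast
      have "B1 \<subseteq> B2 \<or> B2 \<subseteq> B1" using chainsD[OF C B(1) B(2)] .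
      then obtain B where "B \<in> C" "P \<in> B" "Q \<in> B" using B by blast
      then show "indep A P Q" using CF FamD2 \<open>P \<noteq> Q\<close> by blast
    qed
  qed
  then obtain M where M: "M \<in> Fam" "\<forall>X\<in>Fam. M \<subseteq> X \<longrightarrow> X = M" using Zorn_Lemma by blast
  have MU: "M \<subseteq> U" using FamD1[OF M(1)] .
  have Mi: "\<And>P Q. P \<in> M \<Longrightarrow> Q \<in> M \<Longrightarrow> P \<noteq> Q \<Longrightarrow> indep A P Q" using FamD2[OF M(1)] by blast
  have card: "|M| \<le>o |K|"
  proof (rule ccontr)
    assume "\<not> |M| \<le>o |K|"
    then obtain S' where S': "S' \<subseteq> M" "|S'| =o cardSuc |K|" using big_subset by blast
    have "S' \<subseteq> U" using S'(1) MU by (rule subset_trans)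
    then have "\<exists>T \<subseteq> S'. infinite T \<and> countable T \<and> (\<exists>V\<in>U. \<forall>W\<in>T. V \<subseteq> W)"
      using cal[unfolded calibre_succ_omega_def, rule_format] S'(2) by blast
    then obtain T V where TV: "T \<subseteq> S'" "infinite T" "V \<in> U" "\<forall>W\<in>T. V \<subseteq> W"
      by blast
    obtain P Q where PQ: "P \<in> T" "Q \<in> T" "P \<noteq> Q" "\<not> indep A P Q"
      using pigeon[OF un tb TV(3) TV(2) TV(4)] by blast
    have "P \<in> M" "Q \<in> M" using PQ TV(1) S'(1) by auto
    then show False using Mi PQ by blast
  qed
  have ref: "\<exists>P\<in>M. P \<inter> (A \<times> A) \<subseteq> V" if V: "V \<in> U" for V
  proof -
    obtain W where W: "W \<in> U" "W O W O W \<subseteq> V" using u_third[OF un V] by blast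
    have Wsub: "W \<subseteq> H3 W"
    proof
      fix p assume "p \<in> W"
      then obtain x y where p: "p = (x,y)" "(x,y) \<in> W" by (cases p) auto
      then have "y \<in> S" using u_sub[OF un W(1)] by blast
      then have "(y,y) \<in> W" using u_refl[OF un W(1)] by blast
      then have "(x,y) \<in> W O W O W" using p(2) by (intro relcompI)
      then show "p \<in> H3 W" using p(1) unfolding H3_def by simp
    qed
    have HV: "H3 W \<subseteq> V" unfolding H3_def by (rule W(2))
    show ?thesis
    proof (cases "W \<in> M")
      case True
      have "W \<subseteq> V" using Wsub HV by (rule subset_trans)
      then have "W \<inter> (A \<times> A) \<subseteq> V" by (meson Int_lower1 subset_trans)
      then show ?thesis using True by blast
    next
      case False
      have ins: "insert W M \<subseteq> U" using MU W(1) by simp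
      have "insert W M \<notin> Fam" using M(2) False by blast
      then have "\<exists>P Q. P \<in> insert W M \<and> Q \<in> insert W M \<and> P \<noteq> Q \<and> \<not> indep A P Q"
        using FamI[OF ins] by blast
      then obtain P Q where PQ: "P \<in> insert W M" "Q \<in> insert W M" "P \<noteq> Q" "\<not> indep A P Q" by blast
      have "\<exists>P\<in>M. \<not> indep A P W"
      proof (cases "P = W")
        case True
        then have "Q \<in> M" using PQ by simp
        then show ?thesis using PQ(4) True indep_sym by blast
      next
        case False
        then have "P \<in> M" using PQ by simp
        moreover have "Q = W" using PQ Mi \<open>P \<in> M\<close> by blast
        ultimately show ?thesis using PQ(4) by blast
      qed
      then obtain P where P: "P \<in> M" "\<not> indep A P W" by blast
      have "P \<inter> (A \<times> A) \<subseteq> H3 W" using P(2) unfolding indep_def by simp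
      then have "P \<inter> (A \<times> A) \<subseteq> V" using HV by (rule subset_trans)
      then show ?thesis using P(1) by blast
    qed
  qed
  show ?thesis using MU card ref by blast
qed

lemma c_un: "compatible_uniformity X U \<Longrightarrow> uniformity_on (topspace X) U"
  unfolding compatible_uniformity_def by (elim conjE) assumption
lemma c_open2: "compatible_uniformity X U \<Longrightarrow>
   \<forall>G. openin X G \<longleftrightarrow> G \<subseteq> topspace X \<and> (\<forall>x\<in>G. \<exists>V\<in>U. V `` {x} \<subseteq> G)"
  unfolding compatible_uniformity_def by (elim conjE) assumption
lemma c_openD: "compatible_uniformity X U \<Longrightarrow> openin X G \<Longrightarrow> x \<in> G \<Longrightarrow> \<exists>V\<in>U. V `` {x} \<subseteq> G"
  using c_open2 by blast
lemma c_openI: "compatible_uniformity X U \<Longrightarrow> G \<subseteq> topspace X \<Longrightarrow> (\<And>x. x \<in> G \<Longrightarrow> \<exists>V\<in>U. V `` {x} \<subseteq> G) \<Longrightarrow> openin X G"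
  using c_open2 by blast

definition Ob :: "'a topology \<Rightarrow> ('a \<times> 'a) set set \<Rightarrow> 'a set \<Rightarrow> 'a set" where
  "Ob X U M = {y \<in> topspace X. \<exists>V\<in>U. V `` {y} \<subseteq> M}"

lemma Ob_open:
  assumes c: "compatible_uniformity X U"
  shows "openin X (Ob X U M)"
proof (rule c_openI[OF c])
  show "Ob X U M \<subseteq> topspace X" unfolding Ob_def by blast
next
  have un: "uniformity_on (topspace X) U" by (rule c_un[OF c])
  fix y assume "y \<in> Ob X U M"
  then obtain V where V: "V \<in> U" "V `` {y} \<subseteq> M" "y \<in> topspace X" unfolding Ob_def by blast
  obtain W where W: "W \<in> U" "W O W \<subseteq> V" using u_half[OF un V(1)] by blast
  have "W `` {y} \<subseteq> Ob X U M"
  proof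
    fix z assume "z \<in> W `` {y}"
    then have z: "(y,z) \<in> W" by simp
    then have zS: "z \<in> topspace X" using u_sub[OF un W(1)] by blast
    have "W `` {z} \<subseteq> M"
    proof
      fix w assume "w \<in> W `` {z}"
      then have "(z,w) \<in> W" by simp
      then have "(y,w) \<in> W O W" using z by (rule relcompI[rotated])
      then have "(y,w) \<in> V" using W(2) by (rule subsetD[rotated])
      then show "w \<in> M" using V(2) by blast
    qed
    then show "z \<in> Ob X U M" unfolding Ob_def using zS W(1) by blast
  qed
  then show "\<exists>V\<in>U. V `` {y} \<subseteq> Ob X U M" using W(1) by blast
qed

lemma Ob_sub:
  assumes c: "compatible_uniformity X U" and y: "y \<in> Ob X U M"
  shows "y \<in> M"
proof -
  have un: "uniformity_on (topspace X) U" by (rule c_un[OF c])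
  obtain V where V: "V \<in> U" "V `` {y} \<subseteq> M" "y \<in> topspace X" using y unfolding Ob_def by blast
  have "(y,y) \<in> V" by (rule u_refl[OF un V(1) V(3)])
  then show ?thesis using V(2) by blast
qed

lemma fin_le_inf: "finite F \<Longrightarrow> infinite K \<Longrightarrow> |F| \<le>o |K|"
proof (rule ccontr)
  assume a: "finite F" "infinite K" "\<not> |F| \<le>o |K|"
  then have "|K| <o |F|"
    using not_ordLeq_iff_ordLess[OF card_of_Well_order card_of_Well_order, of F K] by simp
  then have "|K| \<le>o |F|" by (rule ordLess_imp_ordLeq)
  then have "finite K" using a(1) by (rule card_of_ordLeq_finite)
  then show False using a(2) by simp
qed

lemma infinite_case:
  assumes c: "compatible_uniformity X U" and AS: "A \<subseteq> topspace X"
    and tb: "totally_bounded_in U A" and BU: "B \<subseteq> U"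
    and ref: "\<forall>V\<in>U. \<exists>P\<in>B. P \<inter> (A \<times> A) \<subseteq> V"
    and infK: "infinite K" and Bc: "|B| \<le>o |K|"
  shows "weight_le (subtopology X A) K"
proof -
  have un: "uniformity_on (topspace X) U" by (rule c_un[OF c])
  have "\<forall>V\<in>B. \<exists>W F. W \<in> U \<and> W O W \<subseteq> V \<and> finite F \<and> F \<subseteq> A \<and> A \<subseteq> (\<Union>x\<in>F. W `` {x})"
  proof
    fix V assume "V \<in> B"
    then have "V \<in> U" using BU by blast
    then obtain W where W: "W \<in> U" "W O W \<subseteq> V" using u_half[OF un] by blast
    obtain F where F: "finite F \<and> F \<subseteq> A \<and> A \<subseteq> (\<Union>x\<in>F. W `` {x})"
      using tb[unfolded totally_bounded_in_def, rule_format, OF W(1)] by blast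
    have "W \<in> U \<and> W O W \<subseteq> V \<and> finite F \<and> F \<subseteq> A \<and> A \<subseteq> (\<Union>x\<in>F. W `` {x})"
      using W F by (intro conjI) simp_all
    then show "\<exists>W F. W \<in> U \<and> W O W \<subseteq> V \<and> finite F \<and> F \<subseteq> A \<and> A \<subseteq> (\<Union>x\<in>F. W `` {x})"
      by (intro exI)
  qed
  from bchoice[OF this] obtain Wf where "\<forall>V\<in>B. \<exists>F. Wf V \<in> U \<and> Wf V O Wf V \<subseteq> V \<and> finite F \<and> F \<subseteq> A \<and> A \<subseteq> (\<Union>x\<in>F. Wf V `` {x})"
    ..
  from bchoice[OF this] obtain Ff where WF: "\<forall>V\<in>B. Wf V \<in> U \<and> Wf V O Wf V \<subseteq> V \<and> finite (Ff V) \<and> Ff V \<subseteq> A \<and> A \<subseteq> (\<Union>x\<in>Ff V. Wf V `` {x})"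
    ..
  define bb where "bb = (\<lambda>p. A \<inter> Ob X U (fst p `` {snd p})) ` (SIGMA V:B. Ff V)"
  have base: "base_of_top (subtopology X A) bb"
    unfolding base_of_top_def
  proof (intro conjI ballI allI impI)
    fix G assume "G \<in> bb"
    then obtain p where "G = A \<inter> Ob X U (fst p `` {snd p})" "p \<in> Sigma B Ff" unfolding bb_def by (rule imageE)
    then show "openin (subtopology X A) G" using openin_subtopology_Int2[OF Ob_open[OF c]] by simp
  next
    fix G a assume Ga: "openin (subtopology X A) G \<and> a \<in> G"
    have "\<exists>T. openin X T \<and> G = T \<inter> A" using Ga by (simp add: openin_subtopology)
    then obtain T where T: "openin X T" "G = T \<inter> A" by blast
    have aT: "a \<in> T" and aA: "a \<in> A" using Ga T(2) by auto
    have aS: "a \<in> topspace X" using aA AS by blast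
    obtain U0 where U0: "U0 \<in> U" "U0 `` {a} \<subseteq> T" using c_openD[OF c T(1) aT] by blast
    obtain U1 where U1: "U1 \<in> U" "U1 O U1 \<subseteq> U0" "U1\<inverse> = U1" using u_symhalf[OF un U0(1)] by blast
    obtain P where P: "P \<in> B" "P \<inter> (A \<times> A) \<subseteq> U1" using ref U1(1) by blast
    have WP: "Wf P \<in> U" "Wf P O Wf P \<subseteq> P" "finite (Ff P)" "Ff P \<subseteq> A" "A \<subseteq> (\<Union>x\<in>Ff P. Wf P `` {x})"
      using bspec[OF WF P(1)] by simp_all
    obtain x where x: "x \<in> Ff P" "(x,a) \<in> Wf P" using WP(5) aA by blast
    have xA: "x \<in> A" using x(1) WP(4) by blast
    have mem: "A \<inter> Ob X U (P `` {x}) \<in> bb" unfolding bb_def using P(1) x(1) by (intro image_eqI[of _ _ "(P,x)"]) auto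
    have "Wf P `` {a} \<subseteq> P `` {x}"
    proof
      fix z assume "z \<in> Wf P `` {a}"
      then have "(a,z) \<in> Wf P" by simp
      then have "(x,z) \<in> Wf P O Wf P" using x(2) by (rule relcompI[rotated])
      then have "(x,z) \<in> P" using WP(2) by (rule subsetD[rotated])
      then show "z \<in> P `` {x}" by simp
    qed
    then have ain: "a \<in> A \<inter> Ob X U (P `` {x})" unfolding Ob_def using aA aS WP(1) by blast
    have "(a,a) \<in> Wf P" by (rule u_refl[OF un WP(1) aS])
    then have "(x,a) \<in> Wf P O Wf P" using x(2) by (rule relcompI[rotated])
    then have "(x,a) \<in> P" using WP(2) by (rule subsetD[rotated])
    then have "(x,a) \<in> U1" using P(2) xA aA by blast
    then have ax: "(a,x) \<in> U1" using U1(3) by blast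
    have "A \<inter> Ob X U (P `` {x}) \<subseteq> G"
    proof
      fix y assume y: "y \<in> A \<inter> Ob X U (P `` {x})"
      then have "y \<in> P `` {x}" using Ob_sub[OF c] by blast
      then have "(x,y) \<in> P" by simp
      then have "(x,y) \<in> U1" using P(2) xA y by blast
      then have "(a,y) \<in> U1 O U1" using ax by (rule relcompI[rotated])
      then have "(a,y) \<in> U0" using U1(2) by (rule subsetD[rotated])
      then have "y \<in> T" using U0(2) by blast
      then show "y \<in> G" using y T(2) by blast
    qed
    then show "\<exists>Ba\<in>bb. a \<in> Ba \<and> Ba \<subseteq> G" using mem ain by blast
  qed
  have fin: "\<forall>V\<in>B. |Ff V| \<le>o |K|" using WF fin_le_inf[OF _ infK] by blast
  have "|SIGMA V:B. Ff V| \<le>o |K|" by (rule card_of_Sigma_ordLeq_infinite[OF infK Bc fin])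
  then have "|bb| \<le>o |K|" unfolding bb_def using card_of_image ordLeq_transitive by blast
  then show ?thesis unfolding weight_le_def using base by blast
qed

lemma fin_inter:
  assumes un: "uniformity_on S U"
  shows "finite F \<Longrightarrow> F \<noteq> {} \<Longrightarrow> F \<subseteq> U \<Longrightarrow> \<Inter>F \<in> U"
proof (induction F rule: finite_ne_induct)
  case (singleton x)
  then show ?case by simp
next
  case (insert x F)
  then have "x \<in> U" "\<Inter>F \<in> U" by auto
  then have "x \<inter> \<Inter>F \<in> U" by (rule u_int[OF un])
  then show ?case by simp
qed

lemma finite_case:
  assumes t1: "t1_space X" and c: "compatible_uniformity X U" and AS: "A \<subseteq> topspace X"
    and cal: "calibre_succ_omega U K" and finK: "finite K"
  shows "weight_le (subtopology X A) K"
proof -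
  have un: "uniformity_on (topspace X) U" by (rule c_un[OF c])
  have UK: "|U| \<le>o |K|"
  proof (rule ccontr)
    assume "\<not> |U| \<le>o |K|"
    then obtain S' where S': "S' \<subseteq> U" "|S'| =o cardSuc |K|" using big_subset by blast
    have i: "|Field (cardSuc |K| )| =o cardSuc |K|"
      by (rule card_of_Field_ordIso[OF cardSuc_Card_order[OF card_of_Card_order]])
    have "finite (Field (cardSuc |K| ))"
      using cardSuc_finite[OF card_of_Card_order, of K] finK by (simp add: Field_card_of)
    moreover have "|S'| =o |Field (cardSuc |K| )|"
      by (rule ordIso_transitive[OF S'(2) ordIso_symmetric[OF i]])
    ultimately have finS: "finite S'" using card_of_ordIso_finite by blast
    have "\<exists>T \<subseteq> S'. infinite T \<and> countable T \<and> (\<exists>V\<in>U. \<forall>W\<in>T. V \<subseteq> W)"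
      using cal[unfolded calibre_succ_omega_def, rule_format] S' by blast
    then obtain T where "T \<subseteq> S'" "infinite T" by blast
    then show False using finS finite_subset by blast
  qed
  have finU: "finite U" using card_of_ordLeq_finite[OF UK finK] .
  define S where "S = topspace X"
  have V0: "\<Inter>U \<in> U" using fin_inter[OF un finU u_ne[OF un]] by simp
  have V0Id: "\<Inter>U \<subseteq> Id_on S"
  proof
    fix p assume p: "p \<in> \<Inter>U"
    then obtain x y where xy: "p = (x,y)" "(x,y) \<in> \<Inter>U" by (cases p) auto
    have xS: "x \<in> S" "y \<in> S" using u_sub[OF un V0] xy(2) unfolding S_def by auto
    have "x = y"
    proof (rule ccontr)
      assume "x \<noteq> y"
      then obtain G where G: "openin X G" "x \<in> G" "y \<notin> G"
        using t1 xS unfolding t1_space_def S_def by blast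
      obtain V where V: "V \<in> U" "V `` {x} \<subseteq> G" using c_openD[OF c G(1) G(2)] by blast
      have "(x,y) \<in> V" using xy(2) V(1) by blast
      then show False using V(2) G(3) by blast
    qed
    then show "p \<in> Id_on S" using xy(1) xS by (simp add: Id_onI)
  qed
  have IdU: "Id_on S \<in> U" using u_up[OF un V0 V0Id] unfolding S_def by auto
  have allopen: "openin X G" if "G \<subseteq> S" for G
  proof (rule c_openI[OF c])
    show "G \<subseteq> topspace X" using that unfolding S_def .
  next
    fix x assume "x \<in> G"
    then have "Id_on S `` {x} \<subseteq> G" by auto
    then show "\<exists>V\<in>U. V `` {x} \<subseteq> G" using IdU by blast
  qed
  define bb where "bb = (\<lambda>a. {a}) ` A"
  have base: "base_of_top (subtopology X A) bb"
    unfolding base_of_top_def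
  proof (intro conjI ballI allI impI)
    fix G assume "G \<in> bb"
    then obtain a where a: "G = {a}" "a \<in> A" unfolding bb_def by blast
    then have "openin X {a}" using allopen AS unfolding S_def by blast
    then have "openin (subtopology X A) (A \<inter> {a})" by (rule openin_subtopology_Int2)
    then show "openin (subtopology X A) G" using a by simp
  next
    fix G a assume Ga: "openin (subtopology X A) G \<and> a \<in> G"
    then have "G \<subseteq> topspace X \<inter> A" using openin_subset[of "subtopology X A" G] by simp
    then have "a \<in> A" using Ga by blast
    then show "\<exists>B\<in>bb. a \<in> B \<and> B \<subseteq> G" using Ga unfolding bb_def by blast
  qed
  define f where "f a = Id_on S \<union> ({a} \<times> S)" for a
  have "inj_on f A"
  proof
    fix a b assume ab: "a \<in> A" "b \<in> A" "f a = f b"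
    have "(a,b) \<in> f a" unfolding f_def using ab(2) AS unfolding S_def by blast
    then have "(a,b) \<in> f b" using ab(3) by simp
    then show "a = b" unfolding f_def by auto
  qed
  moreover have "f ` A \<subseteq> U"
  proof
    fix W assume "W \<in> f ` A"
    then obtain a where a: "W = f a" "a \<in> A" by blast
    have "Id_on S \<subseteq> f a" "f a \<subseteq> topspace X \<times> topspace X"
      unfolding f_def S_def using a(2) AS by auto
    then show "W \<in> U" using u_up[OF un IdU[unfolded S_def]] a(1) unfolding S_def by blast
  qed
  ultimately have "|A| \<le>o |U|" using card_of_ordLeq by blast
  then have "|bb| \<le>o |U|" unfolding bb_def using card_of_image ordLeq_transitive by blast
  then have "|bb| \<le>o |K|" using UK ordLeq_transitive by blast
  then show ?thesis unfolding weight_le_def using base by blast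
qed

theorem mainTheorem8:
  fixes X :: "'a topology" and \<U> :: "('a \<times> 'a) set set" and K :: "'k set" and A :: "'a set"
  assumes "Tychonoff_space X"
    and "compatible_uniformity X \<U>"
    and "A \<subseteq> topspace X"
    and "totally_bounded_in \<U> A"
    and "calibre_succ_omega \<U> K"
  shows "weight_le (subtopology X A) K"
proof (cases "finite K")
  case True
  have "t1_space X" using assms(1) unfolding Tychonoff_space_def by simp
  then show ?thesis using finite_case assms(2,3,5) True by blast
next
  case False
  obtain B where B: "B \<subseteq> \<U>" "|B| \<le>o |K|" "\<forall>V\<in>\<U>. \<exists>P\<in>B. P \<inter> (A \<times> A) \<subseteq> V"
    using zorn_family[OF c_un[OF assms(2)] assms(4) assms(5)] by blast
  show ?thesis by (rule infinite_case[OF assms(2) assms(3) assms(4) B(1) B(3) False B(2)])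
qed

end
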